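(* Consider an instance of the multi-vehicle dial-a-ride problem with vehicle locations $o_1,\dots,o_h$, capacity $\lambda$, and requests $(s_1,t_1),\dots,(s_m,t_m)$ in a metric $w$. Let $\mathcal{T}_s$ and $\mathcal{T}_t$ be sets of tours such that for each vehicle $o_{i'}$ there is exactly one tour $T_s=o_{i'}s_{j_1}s_{j_2}\dots s_{j_q}\in\mathcal{T}_s$ and exactly one tour $T_t=o_{i'}t_{j_1}t_{j_2}\dots t_{j_q}\in\mathcal{T}_t$ (same index sequence), and every request index appears in exactly one of these index sequences. For each such pair (writing $a_k=s_{j_k}$, $b_k=t_{j_k}$), build a route $W_{o_{i'}}$ as follows. If $q\le\lambda$, let $W_{o_{i'}}=o_{i'}a_1\dots a_q b_1\dots b_q$. If $q>\lambda$, choose $\theta$ uniformly at random from $\{1,\dots,\lambda\}$, let $N_\theta=\lceil (q-\theta)/\lambda\rceil+1$, split the index range $1,\dots,q$ into consecutive blocks $I_1=\{1,\dots,\theta\}$, $I_2=\{\theta+1,\dots,\theta+\lambda\}$, $\dots$, $I_{N_\theta}=\{\theta+\lambda(N_\theta-2)+1,\dots,q\}$, and let $W_{o_{i'}}$ be the walk starting at $o_{i'}$ that, for $j=1,\dots,N_\theta$ in order, visits $a_k$ for $k\in I_j$ in increasing order of $k$ and then $b_k$ for $k\in I_j$ in increasing order of $k$. Let $\mathcal{W}$ be the set of all routes built. Then $$\mathbb{E}[w(\mathcal{W})]\le \frac{2}{\lambda}\sum_{j=1}^m w(s_j,t_j)+3\big(w(\mathcal{T}_s)+w(\mathcal{T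}_t)\big).$$
   Context: The metric $w$ satisfies $w(a,a)=0$, symmetry and the triangle inequality. The weight of a walk $v_1v_2\dots v_q$ is $\sum_{j=1}^{q-1}w(v_j,v_{j+1})$; the weight of a tour $v_1v_2\dots v_q$ is $\sum_{j=1}^{q-1}w(v_j,v_{j+1})+w(v_q,v_1)$; the weight of a set of walks or tours is the sum of their weights. Sources, destinations and vehicle locations are treated as pairwise distinct points (possibly at distance $0$). *)

theory Defs
  imports "HOL-Probability.Probability"
begin

definition walk_weight :: "('a \<Rightarrow> 'a \<Rightarrow> real) \<Rightarrow> 'a list \<Rightarrow> real" where
  "walk_weight w xs = sum_list (map (\<lambda>(x, y). w x y) (zip xs (tl xs)))"

definition tour_weight :: "('a \<Rightarrow> 'a \<Rightarrow> real) \<Rightarrow> 'a list \<Rightarrow> real" where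
  "tour_weight w xs = walk_weight w xs + (if xs = [] then 0 else w (last xs) (hd xs))"

definition num_blocks :: "nat \<Rightarrow> nat \<Rightarrow> nat \<Rightarrow> nat" where
  "num_blocks lam theta q = nat \<lceil>(real q - real theta) / real lam\<rceil> + 1"

definition blocks :: "nat \<Rightarrow> nat \<Rightarrow> nat \<Rightarrow> nat list list" where
  "blocks lam theta q =
     [1..<theta + 1] #
     map (\<lambda>j. [theta + lam * (j - 2) + 1 ..< min q (theta + lam * (j - 1)) + 1])
         [2..<num_blocks lam theta q + 1]"

definition block_walk :: "'a \<Rightarrow> 'a list \<Rightarrow> 'a list \<Rightarrow> nat list list \<Rightarrow> 'a list" where
  "block_walk o' a b Is =
     o' # concat (map (\<lambda>I. map (\<lambda>k. a ! (k - 1)) I @ map (\<lambda>k. b ! (k - 1)) I) Is)"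

definition route :: "nat \<Rightarrow> nat \<Rightarrow> 'a \<Rightarrow> 'a list \<Rightarrow> 'a list \<Rightarrow> 'a list" where
  "route lam theta o' a b =
     (if length a \<le> lam then o' # a @ b
      else block_walk o' a b (blocks lam theta (length a)))"

end

theory Submission
  imports Defs
begin


locale metw =
  fixes w :: "'a \<Rightarrow> 'a \<Rightarrow> real"
  assumes refl: "\<And>x. w x x = 0"
    and sym: "\<And>x y. w x y = w y x"
    and tri: "\<And>x y z. w x z \<le> w x y + w y z"
begin

lemma nonneg: "w x y \<ge> 0"
  using tri[where x=x and y=y and z=x] refl[of x] sym[of x y] by linarith

lemma ww_Nil[simp]: "walk_weight w [] = 0" and ww_single[simp]: "walk_weight w [x] = 0"
  and ww_cons2[simp]: "walk_weight w (x # y # xs) = w x y + walk_weight w (y # xs)"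
  by (simp_all add: walk_weight_def)

lemma ww_cons: "xs \<noteq> [] \<Longrightarrow> walk_weight w (x # xs) = w x (hd xs) + walk_weight w xs"
  by (cases xs) auto

lemma ww_nonneg: "walk_weight w xs \<ge> 0"
proof (induction xs rule: induct_list012)
  case (3 x y zs) then show ?case using nonneg[of x y] by simp
qed auto

lemma ww_append: "xs \<noteq> [] \<Longrightarrow> ys \<noteq> [] \<Longrightarrow>
   walk_weight w (xs @ ys) = walk_weight w xs + w (last xs) (hd ys) + walk_weight w ys"
proof (induction xs rule: induct_list012)
  case (2 x) then show ?case by (simp add: ww_cons)
next
  case (3 x y zs) then show ?case by simp
qed auto

lemma ww_hd_last: "xs \<noteq> [] \<Longrightarrow> w (hd xs) (last xs) \<le> walk_weight w xs"
proof (induction xs rule: induct_list012)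
  case (2 x) then show ?case by (simp add: refl)
next
  case (3 x y zs)
  then have "w y (last (y#zs)) \<le> walk_weight w (y # zs)" by simp
  then show ?case using tri[where x=x and y=y and z="last (y#zs)"] by simp
qed auto

lemma tour_ge: "xs \<noteq> [] \<Longrightarrow> walk_weight w (x # xs) \<le> tour_weight w (x # xs)"
  by (simp add: tour_weight_def nonneg)

lemma tour_nonneg: "tour_weight w xs \<ge> 0"
  by (simp add: tour_weight_def nonneg ww_nonneg)

lemma ww_split: "l < u \<Longrightarrow> u < v \<Longrightarrow> walk_weight w (map f [l..<v]) =
   walk_weight w (map f [l..<u]) + w (f (u - 1)) (f u) + walk_weight w (map f [u..<v])"
proof -
  assume a: "l < u" "u < v"
  have "[l..<v] = [l..<u] @ [u..<v]" using upt_add_eq_append[of l u "v-u"] a by simp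
  then have "map f [l..<v] = map f [l..<u] @ map f [u..<v]" by simp
  moreover have "last (map f [l..<u]) = f (u - 1)" using a by (simp add: last_map)
  moreover have "hd (map f [u..<v]) = f u" using a by (simp add: hd_map)
  ultimately show ?thesis using a ww_append by simp
qed

end

inductive consec :: "nat \<Rightarrow> nat list list \<Rightarrow> nat \<Rightarrow> bool" where
  cnil: "consec l [] l"
| ccons: "l < u \<Longrightarrow> consec u Is v \<Longrightarrow> consec l ([l..<u] # Is) v"

lemma consec_le: "consec l Is v \<Longrightarrow> l \<le> v"
  by (induction rule: consec.induct) auto

context metw begin

definition blk :: "(nat \<Rightarrow> 'a) \<Rightarrow> (nat \<Rightarrow> 'a) \<Rightarrow> nat list \<Rightarrow> 'a list" where
  "blk fA fB I = map fA I @ map fB I"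

lemma block_bound:
  assumes "consec l Is v" "Is \<noteq> []"
  shows "walk_weight w (concat (map (blk fA fB) Is)) \<le>
     2 * walk_weight w (map fA [l..<v]) + walk_weight w (map fB [l..<v]) + w (fA l) (fB l)
     + 2 * sum_list (map (\<lambda>I. w (fA (hd I)) (fB (hd I))) (tl Is))"
  using assms
proof (induction rule: consec.induct)
  case (cnil l) then show ?case by simp
next
  case (ccons l u Is v)
  let ?A = "map fA [l..<u]" and ?B = "map fB [l..<u]"
  have ne: "?A \<noteq> []" "?B \<noteq> []" using ccons.hyps by auto
  have "w (fA (u - 1)) (fB l) \<le> w (fA (u - 1)) (fA l) + w (fA l) (fB l)" by (rule tri)
  moreover have "w (fA (u - 1)) (fA l) \<le> walk_weight w ?A"
    using ww_hd_last[of ?A] ne ccons.hyps by (simp add: sym hd_map last_map)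
  ultimately have b1: "walk_weight w (blk fA fB [l..<u]) \<le> 2 * walk_weight w ?A + walk_weight w ?B + w (fA l) (fB l)"
    using ww_append[of ?A ?B] ne ccons.hyps by (simp add: blk_def hd_map last_map)
  show ?case
  proof (cases "Is = []")
    case True
    then have "v = u" using ccons.hyps(2) consec.cases by blast
    then show ?thesis using b1 True by simp
  next
    case False
    then obtain u' Is' where Is: "Is = [u..<u'] # Is'" "u < u'" "consec u' Is' v"
      using ccons.hyps(2) consec.cases by blast
    have uv: "u < v" using Is consec_le by fastforce
    have hdc: "hd (concat (map (blk fA fB) Is)) = fA u" "concat (map (blk fA fB) Is) \<noteq> []"
      using Is by (auto simp: blk_def upt_rec)
    have "walk_weight w (concat (map (blk fA fB) ([l..<u] # Is))) =
      walk_weight w (blk fA fB [l..<u]) + w (fB (u - 1)) (fA u) + walk_weight w (concat (map (blk fA fB) Is))"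
      using ww_append[of "blk fA fB [l..<u]" "concat (map (blk fA fB) Is)"] hdc ne ccons.hyps
      by (simp add: blk_def last_map)
    moreover have "w (fB (u - 1)) (fA u) \<le> w (fB (u - 1)) (fB u) + w (fA u) (fB u)"
      using tri[where x="fB (u - 1)" and y="fB u" and z="fA u"] sym[of "fB u"] by simp
    moreover note ccons.IH[OF False]
    moreover have "walk_weight w (map fA [l..<v]) \<ge> walk_weight w ?A + walk_weight w (map fA [u..<v])"
      using ww_split[of l u v fA] ccons.hyps uv nonneg[of "fA (u - 1)" "fA u"] by simp
    moreover have "walk_weight w (map fB [l..<v]) = walk_weight w ?B + w (fB (u - 1)) (fB u) + walk_weight w (map fB [u..<v])"
      using ww_split[of l u v fB] ccons.hyps uv by simp
    moreover have "sum_list (map (\<lambda>I. w (fA (hd I)) (fB (hd I))) (tl ([l..<u] # Is)))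
       = w (fA u) (fB u) + sum_list (map (\<lambda>I. w (fA (hd I)) (fB (hd I))) (tl Is))"
      using Is by simp
    ultimately show ?thesis using b1 by linarith
  qed
qed

end


lemma ceil_facts:
  assumes "lam \<ge> 1" "\<theta> < q"
  defines "c \<equiv> nat \<lceil>(real q - real \<theta>) / real lam\<rceil>"
  shows "c \<ge> 1" "q - \<theta> \<le> lam * c" "lam * (c - 1) < q - \<theta>"
proof -
  let ?x = "(real q - real \<theta>) / real lam"
  have xpos: "?x > 0" using assms by simp
  have c1: "real c \<ge> ?x" unfolding c_def using xpos
    by (metis le_of_int_ceiling of_int_of_nat_eq ceiling_le_zero less_le_not_le nat_0_le nle_le)
  have c2: "real c - 1 < ?x" unfolding c_def using xpos
    by (smt (verit, ccfv_threshold) ceiling_correct ceiling_le_zero of_nat_nat)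
  show "c \<ge> 1" using c1 xpos by linarith
  have "real q - real \<theta> \<le> real lam * real c" using c1 assms(1)
    by (simp add: divide_le_eq mult.commute)
  then show "q - \<theta> \<le> lam * c" using assms(2)
    by (metis of_nat_diff less_imp_le of_nat_le_iff of_nat_mult)
  have "real lam * (real c - 1) < real q - real \<theta>" using c2 assms(1)
    by (simp add: less_divide_eq mult.commute)
  moreover have "real (lam * (c - 1)) = real lam * (real c - 1)" using \<open>c \<ge> 1\<close> by (simp add: of_nat_diff)
  ultimately show "lam * (c - 1) < q - \<theta>" using assms(2)
    by (metis of_nat_diff less_imp_le of_nat_less_iff)
qed

definition Bk :: "nat \<Rightarrow> nat \<Rightarrow> nat \<Rightarrow> nat \<Rightarrow> nat list" where
  "Bk lam \<theta> q i = [\<theta> + lam * i + 1 ..< min q (\<theta> + lam * (i + 1)) + 1]"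

lemma blocks_eq:
  "blocks lam \<theta> q = [1..<\<theta>+1] # map (Bk lam \<theta> q) [0..<nat \<lceil>(real q - real \<theta>) / real lam\<rceil>]"
proof -
  let ?c = "nat \<lceil>(real q - real \<theta>) / real lam\<rceil>"
  have e1: "num_blocks lam \<theta> q + 1 = ?c + 2" by (simp add: num_blocks_def)
  have "[2..<?c + 2] = map (\<lambda>i. i + 2) [0..<?c]" by (metis map_add_upt)
  then have "[2..<num_blocks lam \<theta> q + 1] = map (\<lambda>i. i + 2) [0..<?c]" using e1 by simp
  then show ?thesis by (simp add: blocks_def Bk_def)
qed

lemma consec_Bk:
  assumes "lam \<ge> 1" "\<theta> < q" "q - \<theta> \<le> lam * c" "lam * (c - 1) < q - \<theta>"
  shows "i0 < c \<Longrightarrow> consec (\<theta> + lam * i0 + 1) (map (Bk lam \<theta> q) [i0..<c]) (q + 1)"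
proof (induction "c - i0" arbitrary: i0)
  case 0 then show ?case by simp
next
  case (Suc k)
  have ic: "lam * i0 \<le> lam * (c - 1)" using Suc.prems by (intro mult_le_mono2) simp
  have "\<theta> + lam * i0 < q" using ic assms(2,4) by linarith
  then have lt: "\<theta> + lam * i0 + 1 < min q (\<theta> + lam * (i0 + 1)) + 1"
    using assms by simp
  have split: "map (Bk lam \<theta> q) [i0..<c] = Bk lam \<theta> q i0 # map (Bk lam \<theta> q) [i0+1..<c]"
    using Suc.prems by (simp add: upt_conv_Cons)
  show ?case
  proof (cases "i0 + 1 = c")
    case True
    have "q - \<theta> \<le> lam * (i0 + 1)" using True assms(3) by simp
    then have "q \<le> \<theta> + lam * (i0 + 1)" using assms(2) by linarith
    then have "Bk lam \<theta> q i0 = [\<theta> + lam * i0 + 1..<q+1]" by (simp add: Bk_def)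
    moreover have "[i0+1..<c] = []" using True by simp
    ultimately show ?thesis unfolding split using \<open>\<theta> + lam * i0 < q\<close>
      by (metis list.simps(8) consec.ccons consec.cnil Suc_eq_plus1 Suc_less_eq)
  next
    case False
    then have i1: "i0 + 1 < c" using Suc.prems by simp
    have "lam * (i0+1) \<le> lam * (c - 1)" using i1 by (intro mult_le_mono2) simp
    then have "\<theta> + lam * (i0 + 1) < q" using assms(2,4) by linarith
    then have "Bk lam \<theta> q i0 = [\<theta> + lam * i0 + 1..<\<theta> + lam * (i0+1) + 1]" by (simp add: Bk_def)
    moreover have "consec (\<theta> + lam * (i0+1) + 1) (map (Bk lam \<theta> q) [i0+1..<c]) (q + 1)"
      using Suc.hyps(1)[of "i0+1"] Suc.hyps(2) i1 by simp
    moreover have "\<theta> + lam * i0 + 1 < \<theta> + lam * (i0+1) + 1" using assms(1) by simp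
    ultimately show ?thesis unfolding split by (metis consec.ccons)
  qed
qed



lemma map_shift_nth: "length a = q \<Longrightarrow> map (\<lambda>k. a ! (k - 1)) [1..<q+1] = a"
  by (rule nth_equalityI) (auto simp del: upt_Suc)

context metw begin

lemma tour_lb: "a \<noteq> [] \<Longrightarrow> w o' (a ! 0) + walk_weight w a \<le> tour_weight w (o' # a)"
  using tour_ge[of a o'] ww_cons[of a o'] by (simp add: hd_conv_nth)

lemma route_big:
  assumes len: "length b = length a" and big: "lam < length a" and th: "1 \<le> \<theta>" "\<theta> \<le> lam"
  shows "walk_weight w (route lam \<theta> o' a b) \<le> 2 * tour_weight w (o' # a) + tour_weight w (o' # b)
     + 2 * (\<Sum>i<nat \<lceil>(real (length a) - real \<theta>) / real lam\<rceil>. w (a ! (\<theta> + lam * i)) (b ! (\<theta> + lam * i)))"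
proof -
  define q where "q = length a"
  define c where "c = nat \<lceil>(real q - real \<theta>) / real lam\<rceil>"
  define fA where "fA = (\<lambda>k. a ! (k - 1))"
  define fB where "fB = (\<lambda>k. b ! (k - 1))"
  have lam1: "lam \<ge> 1" using th by simp
  have tq: "\<theta> < q" using big th q_def by simp
  note cf = ceil_facts[OF lam1 tq, folded c_def]
  have Is: "blocks lam \<theta> q = [1..<\<theta>+1] # map (Bk lam \<theta> q) [0..<c]"
    unfolding c_def by (rule blocks_eq)
  have cB: "consec (\<theta> + 1) (map (Bk lam \<theta> q) [0..<c]) (q + 1)"
    using consec_Bk[OF lam1 tq cf(2) cf(3), of 0] cf(1) by simp
  have cI: "consec 1 (blocks lam \<theta> q) (q + 1)" unfolding Is
    using th by (intro consec.ccons cB) simp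
  have blkE: "blk fA fB = (\<lambda>I. map fA I @ map fB I)" by (rule ext) (simp add: blk_def)
  have rt: "route lam \<theta> o' a b = o' # concat (map (blk fA fB) (blocks lam \<theta> q))"
    unfolding blkE using big by (simp add: route_def block_walk_def fA_def fB_def q_def)
  have hdc: "hd (concat (map (blk fA fB) (blocks lam \<theta> q))) = a ! 0"
     "concat (map (blk fA fB) (blocks lam \<theta> q)) \<noteq> []"
    unfolding Is using th by (auto simp: blk_def fA_def upt_rec)
  have bb: "walk_weight w (concat (map (blk fA fB) (blocks lam \<theta> q))) \<le>
     2 * walk_weight w (map fA [1..<q+1]) + walk_weight w (map fB [1..<q+1]) + w (fA 1) (fB 1)
     + 2 * sum_list (map (\<lambda>I. w (fA (hd I)) (fB (hd I))) (tl (blocks lam \<theta> q)))"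
    using block_bound[OF cI] Is by simp
  have mA: "map fA [1..<q+1] = a" unfolding fA_def by (rule map_shift_nth) (simp add: q_def)
  have mB: "map fB [1..<q+1] = b" unfolding fB_def by (rule map_shift_nth) (simp add: q_def len)
  have hdI: "\<And>i. i < c \<Longrightarrow> hd (Bk lam \<theta> q i) = \<theta> + lam * i + 1"
  proof -
    fix i assume "i < c"
    then have "lam * i \<le> lam * (c - 1)" by (intro mult_le_mono2) simp
    then have "\<theta> + lam * i < q" using cf(3) tq by linarith
    then show "hd (Bk lam \<theta> q i) = \<theta> + lam * i + 1" using lam1 by (simp add: Bk_def del: upt_Suc)
  qed
  have "sum_list (map (\<lambda>I. w (fA (hd I)) (fB (hd I))) (tl (blocks lam \<theta> q)))
     = sum_list (map (\<lambda>i. w (a ! (\<theta> + lam * i)) (b ! (\<theta> + lam * i))) [0..<c])"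
    unfolding Is by (auto intro!: arg_cong[where f=sum_list] simp: hdI fA_def fB_def)
  also have "\<dots> = (\<Sum>i<c. w (a ! (\<theta> + lam * i)) (b ! (\<theta> + lam * i)))"
    by (simp add: interv_sum_list_conv_sum_set_nat atLeast0LessThan)
  finally have ss: "sum_list (map (\<lambda>I. w (fA (hd I)) (fB (hd I))) (tl (blocks lam \<theta> q)))
     = (\<Sum>i<c. w (a ! (\<theta> + lam * i)) (b ! (\<theta> + lam * i)))" .
  have ane: "a \<noteq> []" "b \<noteq> []" using big len by auto
  have t1: "w (a ! 0) (b ! 0) \<le> w o' (a ! 0) + w o' (b ! 0)"
    using tri[where x="a!0" and y=o' and z="b!0"] sym[of "a!0" o'] by simp
  have "walk_weight w (route lam \<theta> o' a b) = w o' (a ! 0) + walk_weight w (concat (map (blk fA fB) (blocks lam \<theta> q)))"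
    unfolding rt using ww_cons[OF hdc(2)] hdc(1) by simp
  then show ?thesis using bb mA mB ss t1 tour_lb[OF ane(1), of o'] tour_lb[OF ane(2), of o']
    by (simp add: fA_def fB_def q_def[symmetric] c_def[symmetric])
qed

lemma route_small:
  assumes len: "length b = length a" and sm: "length a \<le> lam"
  shows "walk_weight w (route lam \<theta> o' a b) \<le> tour_weight w (o' # a) + tour_weight w (o' # b)"
proof (cases "a = []")
  case True then show ?thesis using len by (simp add: route_def tour_nonneg add_nonneg_nonneg)
next
  case False
  then have bne: "b \<noteq> []" using len by auto
  have "walk_weight w (route lam \<theta> o' a b) = walk_weight w (o' # a) + w (last (o' # a)) (hd b) + walk_weight w b"
    using sm ww_append[of "o' # a" b] bne by (simp add: route_def)
  moreover have "w (last (o' # a)) (hd b) \<le> w (last (o' # a)) o' + w o' (hd b)" by (rule tri)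
  moreover have "walk_weight w (o' # a) + w (last (o' # a)) o' = tour_weight w (o' # a)"
    by (simp add: tour_weight_def)
  moreover have "w o' (hd b) + walk_weight w b \<le> tour_weight w (o' # b)"
    using tour_ge[OF bne, of o'] ww_cons[OF bne, of o'] by simp
  ultimately show ?thesis by linarith
qed

end


lemma avg:
  fixes d :: "nat \<Rightarrow> real"
  assumes dnn: "\<And>k. d k \<ge> 0" and lam1: "lam \<ge> 1" and big: "lam < q"
  shows "(\<Sum>\<theta>\<in>{1..lam}. \<Sum>i<nat \<lceil>(real q - real \<theta>) / real lam\<rceil>. d (\<theta> + lam * i)) \<le> (\<Sum>k<q. d k)"
proof -
  define c where "c = (\<lambda>\<theta>. nat \<lceil>(real q - real \<theta>) / real lam\<rceil>)"
  define S where "S = (SIGMA \<theta>:{1..lam}. {..<c \<theta>})"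
  define g where "g = (\<lambda>(\<theta>::nat, i::nat). \<theta> + lam * i)"
  have fS: "finite S" unfolding S_def by auto
  have inj: "inj_on g S"
  proof (rule inj_onI)
    fix p p' assume "p \<in> S" "p' \<in> S" "g p = g p'"
    then obtain \<theta> i \<theta>' i' where p: "p = (\<theta>, i)" "p' = (\<theta>', i')" "1 \<le> \<theta>" "\<theta> \<le> lam" "1 \<le> \<theta>'" "\<theta>' \<le> lam"
      and e: "\<theta> + lam * i = \<theta>' + lam * i'"
      unfolding S_def g_def by auto
    have "(\<theta> - 1 + lam * i) mod lam = (\<theta>' - 1 + lam * i') mod lam" using e p(3,5) by (metis Nat.add_diff_assoc2)
    then have "(\<theta> - 1) mod lam = (\<theta>' - 1) mod lam" by simp
    moreover have "\<theta> - 1 < lam" "\<theta>' - 1 < lam" using p by auto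
    ultimately have "\<theta> - 1 = \<theta>' - 1" by simp
    then have "\<theta> = \<theta>'" using p by simp
    then have "i = i'" using e lam1 by simp
    then show "p = p'" using p \<open>\<theta> = \<theta>'\<close> by simp
  qed
  have "(\<Sum>\<theta>\<in>{1..lam}. \<Sum>i<c \<theta>. d (\<theta> + lam * i)) = (\<Sum>p\<in>S. d (g p))"
    unfolding S_def g_def by (subst sum.Sigma) (auto intro!: sum.cong split: prod.splits)
  also have "\<dots> = sum d (g ` S)" using inj by (simp add: sum.reindex)
  also have "\<dots> \<le> sum d {..<q}"
  proof (rule sum_mono2)
    show "g ` S \<subseteq> {..<q}"
    proof
      fix k assume "k \<in> g ` S"
      then obtain \<theta> i where th: "1 \<le> \<theta>" "\<theta> \<le> lam" "i < c \<theta>" and k: "k = \<theta> + lam * i"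
        unfolding S_def g_def by auto
      have tq: "\<theta> < q" using th big by simp
      note cf = ceil_facts[OF lam1 tq]
      have m: "lam * i \<le> lam * (c \<theta> - 1)" using th by (intro mult_le_mono2) simp
      have "\<theta> + lam * i < q" using m cf(3) tq unfolding c_def by linarith
      then show "k \<in> {..<q}" using k by simp
    qed
  qed (use dnn in auto)
  finally show ?thesis unfolding c_def .
qed

lemma lin3: "(X::real) \<le> 2 * A + B + 2 * S \<Longrightarrow> 0 \<le> A \<Longrightarrow> 0 \<le> B \<Longrightarrow> X \<le> 3 * (A + B) + 2 * S"
  unfolding distrib_left by linarith

context metw begin

lemma vehicle:
  assumes len: "length b = length a" and lam1: "lam \<ge> 1"
  shows "(\<Sum>\<theta>\<in>{1..lam}. walk_weight w (route lam \<theta> o' a b))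
     \<le> 2 * (\<Sum>k<length a. w (a ! k) (b ! k)) + real lam * (3 * (tour_weight w (o' # a) + tour_weight w (o' # b)))"
proof -
  let ?T = "tour_weight w (o' # a) + tour_weight w (o' # b)"
  have Tn: "?T \<ge> 0" using tour_nonneg[of "o' # a"] tour_nonneg[of "o' # b"] by simp
  have Dn: "(\<Sum>k<length a. w (a ! k) (b ! k)) \<ge> 0" by (rule sum_nonneg) (simp add: nonneg)
  show ?thesis
  proof (cases "length a \<le> lam")
    case True
    have "(\<Sum>\<theta>\<in>{1..lam}. walk_weight w (route lam \<theta> o' a b)) \<le> (\<Sum>\<theta>\<in>{1..lam}. ?T)"
      by (rule sum_mono) (rule route_small[OF len True])
    also have "\<dots> = real lam * ?T" by simp
    finally show ?thesis using Tn Dn by (smt (verit) mult_left_mono of_nat_0_le_iff)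
  next
    case False
    let ?S = "\<lambda>\<theta>. (\<Sum>i<nat \<lceil>(real (length a) - real \<theta>) / real lam\<rceil>. w (a ! (\<theta> + lam * i)) (b ! (\<theta> + lam * i)))"
    have "(\<Sum>\<theta>\<in>{1..lam}. walk_weight w (route lam \<theta> o' a b)) \<le> (\<Sum>\<theta>\<in>{1..lam}. 3 * ?T + 2 * ?S \<theta>)"
    proof (rule sum_mono)
      fix \<theta> assume th: "\<theta> \<in> {1..lam}"
      have "walk_weight w (route lam \<theta> o' a b) \<le> 2 * tour_weight w (o' # a) + tour_weight w (o' # b) + 2 * ?S \<theta>"
        using th False by (intro route_big[OF len]) auto
      then show "walk_weight w (route lam \<theta> o' a b) \<le> 3 * ?T + 2 * ?S \<theta>"
        using tour_nonneg[of "o' # a"] tour_nonneg[of "o' # b"] by (rule lin3)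
    qed
    also have "\<dots> = real lam * (3 * ?T) + 2 * (\<Sum>\<theta>\<in>{1..lam}. ?S \<theta>)"
      by (simp add: sum.distrib sum_distrib_left)
    also have "\<dots> \<le> real lam * (3 * ?T) + 2 * (\<Sum>k<length a. w (a ! k) (b ! k))"
      using avg[of "\<lambda>k. w (a ! k) (b ! k)" lam "length a"] nonneg lam1 False by simp
    finally show ?thesis by simp
  qed
qed

end


lemma sl_count:
  fixes f :: "nat \<Rightarrow> real"
  shows "set xs \<subseteq> {1..m} \<Longrightarrow> sum_list (map f xs) = (\<Sum>j=1..m. real (count_list xs j) * f j)"
proof (induction xs)
  case Nil then show ?case by simp
next
  case (Cons x xs)
  then have x: "x \<in> {1..m}" and IH: "sum_list (map f xs) = (\<Sum>j=1..m. real (count_list xs j) * f j)" by auto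
  have "(\<Sum>j=1..m. real (count_list (x # xs) j) * f j)
      = (\<Sum>j=1..m. (if x = j then f j else 0) + real (count_list xs j) * f j)"
    by (rule sum.cong) (auto simp: algebra_simps)
  also have "\<dots> = f x + (\<Sum>j=1..m. real (count_list xs j) * f j)"
    using x by (simp add: sum.distrib)
  finally show ?case using IH by simp
qed

lemma sum_seq:
  fixes f :: "nat \<Rightarrow> real"
  assumes seq_range: "\<And>i. i \<in> {1..h} \<Longrightarrow> set (seq i) \<subseteq> {1..m}"
    and seq_once: "\<And>j. j \<in> {1..m} \<Longrightarrow> (\<Sum>i=1..h. count_list (seq i) j) = 1"
  shows "(\<Sum>i=1..h. sum_list (map f (seq i))) = (\<Sum>j=1..m. f j)"
proof -
  have "(\<Sum>i=1..h. sum_list (map f (seq i))) = (\<Sum>i=1..h. \<Sum>j=1..m. real (count_list (seq i) j) * f j)"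
  proof (rule sum.cong[OF refl])
    fix i assume i: "i \<in> {1..h}"
    show "sum_list (map f (seq i)) = (\<Sum>j=1..m. real (count_list (seq i) j) * f j)"
      using seq_range[OF i] by (rule sl_count)
  qed
  also have "\<dots> = (\<Sum>j=1..m. \<Sum>i=1..h. real (count_list (seq i) j) * f j)" by (rule sum.swap)
  also have "\<dots> = (\<Sum>j=1..m. real (\<Sum>i=1..h. count_list (seq i) j) * f j)"
    by (simp add: sum_distrib_right)
  also have "\<dots> = (\<Sum>j=1..m. f j)" using seq_once by simp
  finally show ?thesis .
qed

theorem lemma7:
  fixes w :: "'a \<Rightarrow> 'a \<Rightarrow> real"
    and h m lam :: nat
    and o' s t :: "nat \<Rightarrow> 'a"
    and seq :: "nat \<Rightarrow> nat list"
  assumes w_refl: "\<And>x. w x x = 0"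
    and w_sym: "\<And>x y. w x y = w y x"
    and w_tri: "\<And>x y z. w x z \<le> w x y + w y z"
    and lam_pos: "lam \<ge> 1"
    and inj_o: "inj_on o' {1..h}"
    and inj_s: "inj_on s {1..m}"
    and inj_t: "inj_on t {1..m}"
    and disj_os: "o' ` {1..h} \<inter> s ` {1..m} = {}"
    and disj_ot: "o' ` {1..h} \<inter> t ` {1..m} = {}"
    and disj_st: "s ` {1..m} \<inter> t ` {1..m} = {}"
    and seq_range: "\<And>i. i \<in> {1..h} \<Longrightarrow> set (seq i) \<subseteq> {1..m}"
    and seq_once: "\<And>j. j \<in> {1..m} \<Longrightarrow> (\<Sum>i=1..h. count_list (seq i) j) = 1"
  shows "measure_pmf.expectation (Pi_pmf {1..h} 0 (\<lambda>_. pmf_of_set {1..lam}))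
           (\<lambda>\<theta>. \<Sum>i=1..h. walk_weight w
                (route lam (\<theta> i) (o' i) (map s (seq i)) (map t (seq i))))
         \<le> 2 / real lam * (\<Sum>j=1..m. w (s j) (t j))
           + 3 * ((\<Sum>i=1..h. tour_weight w (o' i # map s (seq i)))
                + (\<Sum>i=1..h. tour_weight w (o' i # map t (seq i))))"
proof -
  interpret metw w using w_refl w_sym w_tri by unfold_locales
  define P where "P = Pi_pmf {1..h} 0 (\<lambda>_. pmf_of_set {1..lam})"
  define F where "F = (\<lambda>i th. walk_weight w (route lam th (o' i) (map s (seq i)) (map t (seq i))))"
  define TA where "TA = (\<lambda>i. tour_weight w (o' i # map s (seq i)))"
  define TB where "TB = (\<lambda>i. tour_weight w (o' i # map t (seq i)))"
  define D where "D = (\<lambda>i. sum_list (map (\<lambda>j. w (s j) (t j)) (seq i)))"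
  have ne: "{1..lam} \<noteq> {}" using lam_pos by simp
  have comp: "\<And>i. i \<in> {1..h} \<Longrightarrow> map_pmf (\<lambda>f. f i) P = pmf_of_set {1..lam}"
    unfolding P_def by (subst Pi_pmf_component) auto
  have integ: "\<And>i. i \<in> {1..h} \<Longrightarrow> integrable (measure_pmf P) (\<lambda>\<theta>. F i (\<theta> i))"
  proof -
    fix i assume i: "i \<in> {1..h}"
    have "integrable (measure_pmf (map_pmf (\<lambda>f. f i) P)) (F i)"
      unfolding comp[OF i] using ne by (intro integrable_measure_pmf_finite) auto
    then show "integrable (measure_pmf P) (\<lambda>\<theta>. F i (\<theta> i))" by simp
  qed
  have Ei: "\<And>i. i \<in> {1..h} \<Longrightarrow> measure_pmf.expectation P (\<lambda>\<theta>. F i (\<theta> i)) = (\<Sum>th\<in>{1..lam}. F i th) / real lam"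
  proof -
    fix i assume i: "i \<in> {1..h}"
    have "measure_pmf.expectation P (\<lambda>\<theta>. F i (\<theta> i)) = measure_pmf.expectation (map_pmf (\<lambda>f. f i) P) (F i)"
      by simp
    also have "\<dots> = (\<Sum>th\<in>{1..lam}. F i th) / real lam"
      unfolding comp[OF i] using ne by (subst integral_pmf_of_set) auto
    finally show "measure_pmf.expectation P (\<lambda>\<theta>. F i (\<theta> i)) = (\<Sum>th\<in>{1..lam}. F i th) / real lam" .
  qed
  have Di: "\<And>i. (\<Sum>k<length (map s (seq i)). w (map s (seq i) ! k) (map t (seq i) ! k)) = D i"
    by (simp add: D_def sum_list_sum_nth atLeast0LessThan)
  have bnd: "\<And>i. (\<Sum>th\<in>{1..lam}. F i th) / real lam \<le> 2 / real lam * D i + 3 * (TA i + TB i)"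
  proof -
    fix i
    have "(\<Sum>th\<in>{1..lam}. F i th) \<le> 2 * D i + real lam * (3 * (TA i + TB i))"
      using vehicle[of "map t (seq i)" "map s (seq i)" lam "o' i"] lam_pos Di[of i]
      unfolding F_def TA_def TB_def by simp
    then have "(\<Sum>th\<in>{1..lam}. F i th) / real lam \<le> (2 * D i + real lam * (3 * (TA i + TB i))) / real lam"
      using lam_pos by (simp add: divide_right_mono)
    also have "\<dots> = 2 / real lam * D i + 3 * (TA i + TB i)" using lam_pos by (simp add: field_simps)
    finally show "(\<Sum>th\<in>{1..lam}. F i th) / real lam \<le> 2 / real lam * D i + 3 * (TA i + TB i)" .
  qed
  have "measure_pmf.expectation P (\<lambda>\<theta>. \<Sum>i=1..h. F i (\<theta> i)) = (\<Sum>i=1..h. measure_pmf.expectation P (\<lambda>\<theta>. F i (\<theta> i)))"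
    by (rule Bochner_Integration.integral_sum) (rule integ)
  also have "\<dots> = (\<Sum>i=1..h. (\<Sum>th\<in>{1..lam}. F i th) / real lam)" by (rule sum.cong[OF HOL.refl]) (rule Ei)
  also have "\<dots> \<le> (\<Sum>i=1..h. 2 / real lam * D i + 3 * (TA i + TB i))" by (rule sum_mono) (rule bnd)
  also have "\<dots> = 2 / real lam * (\<Sum>i=1..h. D i) + 3 * ((\<Sum>i=1..h. TA i) + (\<Sum>i=1..h. TB i))"
    by (simp add: sum.distrib sum_distrib_left)
  also have "(\<Sum>i=1..h. D i) = (\<Sum>j=1..m. w (s j) (t j))"
    unfolding D_def by (rule sum_seq[OF seq_range seq_once])
  finally show ?thesis unfolding P_def F_def TA_def TB_def .
qed


end
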